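(* Let $\mathcal{X}$ be a separable infinite-dimensional complex Banach space, let $T\in\mathcal{B}(\mathcal{X})$ be a diskcyclic operator with diskcyclic vector $x$, and let $I$ be the identity operator on $\mathbb{C}^2$. Put $S=T\oplus I\in\mathcal{B}(\mathcal{X}\oplus\mathbb{C}^2)$ and $\mathcal{N}=\mathcal{X}\oplus\{0\}$. Then $S$ is not diskcyclic on $\mathcal{X}\oplus\mathbb{C}^2$, but $S$ is $\mathcal{N}$-diskcyclic and $(x,0)$ is an $\mathcal{N}$-diskcyclic vector for $S$.
   Context: $\mathbb{D}=\{\alpha\in\mathbb{C}:|\alpha|\le 1\}$. For $T\in\mathcal{B}(\mathcal{X})$ and $x\in\mathcal{X}$, the disk orbit is $\mathbb{D}\mathrm{Orb}(T,x)=\{\alpha T^nx:\alpha\in\mathbb{D},\ n\in\{0,1,2,\dots\}\}$. $T$ is diskcyclic if $\mathbb{D}\mathrm{Orb}(T,x)$ is dense in $\mathcal{X}$ for some $x$ (a diskcyclic vector). For a closed subspace $\mathcal{M}$ (nontrivial: $\mathcal{M}\ne\{0\}$, $\mathcal{M}\ne$ whole space), $T$ is $\mathcal{M}$-diskcyclic if there is a vector $x$ (an $\mathcal{M}$-diskcyclic vector) such that $\mathbb{D}\mathrm{Orb}(T,x)\cap\mathcal{M}$ is dense in $\mathcal{M}$. *)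

theory Defs
  imports "HOL-Analysis.Analysis"
begin

text \<open>HOL-Analysis only provides real normed spaces. A complex Banach space is a
real Banach space together with a complex scalar multiplication extending the real
one and compatible with the norm.\<close>

class cbanach = banach +
  fixes scaleC :: "complex \<Rightarrow> 'a \<Rightarrow> 'a"  (infixr "*\<^sub>C" 75)
  assumes scaleC_add_right: "a *\<^sub>C (x + y) = a *\<^sub>C x + a *\<^sub>C y"
    and scaleC_add_left: "(a + b) *\<^sub>C x = a *\<^sub>C x + b *\<^sub>C x"
    and scaleC_scaleC: "a *\<^sub>C (b *\<^sub>C x) = (a * b) *\<^sub>C x"
    and scaleC_one: "1 *\<^sub>C x = x"
    and scaleR_scaleC: "r *\<^sub>R x = complex_of_real r *\<^sub>C x"
    and norm_scaleC: "norm (a *\<^sub>C x) = cmod a * norm x"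

instantiation complex :: cbanach
begin
definition scaleC_complex :: "complex \<Rightarrow> complex \<Rightarrow> complex" where
  "scaleC_complex a x = a * x"
instance
  by standard (auto simp: scaleC_complex_def algebra_simps norm_mult scaleR_conv_of_real)
end

instantiation prod :: (cbanach, cbanach) cbanach
begin
definition scaleC_prod :: "complex \<Rightarrow> 'a \<times> 'b \<Rightarrow> 'a \<times> 'b" where
  "scaleC_prod a p = (a *\<^sub>C fst p, a *\<^sub>C snd p)"
instance
proof
  fix a b :: complex and x y :: "'a \<times> 'b" and r :: real
  show "a *\<^sub>C (x + y) = a *\<^sub>C x + a *\<^sub>C y"
    by (simp add: scaleC_prod_def scaleC_add_right)
  show "(a + b) *\<^sub>C x = a *\<^sub>C x + b *\<^sub>C x"
    by (simp add: scaleC_prod_def scaleC_add_left)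
  show "a *\<^sub>C (b *\<^sub>C x) = (a * b) *\<^sub>C x"
    by (simp add: scaleC_prod_def scaleC_scaleC)
  show "1 *\<^sub>C x = x"
    by (simp add: scaleC_prod_def scaleC_one)
  show "r *\<^sub>R x = complex_of_real r *\<^sub>C x"
    by (simp add: scaleC_prod_def scaleR_scaleC prod_eq_iff)
  have "(norm (a *\<^sub>C x))\<^sup>2 = (cmod a * norm x)\<^sup>2"
    by (simp add: scaleC_prod_def norm_prod_def norm_scaleC power_mult_distrib
        algebra_simps)
  then show "norm (a *\<^sub>C x) = cmod a * norm x"
    by (simp add: power2_eq_iff_nonneg)
qed
end

definition bounded_clinear_op :: "('a::cbanach \<Rightarrow> 'a) \<Rightarrow> bool" where
  "bounded_clinear_op T \<longleftrightarrow> bounded_linear T \<and> (\<forall>a x. T (a *\<^sub>C x) = a *\<^sub>C T x)"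

definition cspan :: "'a::cbanach set \<Rightarrow> 'a set" where
  "cspan B = {\<Sum>v\<in>F. c v *\<^sub>C v | F c. finite F \<and> F \<subseteq> B}"

definition infinite_dim_complex :: "'a::cbanach itself \<Rightarrow> bool" where
  "infinite_dim_complex _ \<longleftrightarrow> \<not> (\<exists>B::'a set. finite B \<and> cspan B = UNIV)"

definition separable_type :: "'a::topological_space itself \<Rightarrow> bool" where
  "separable_type _ \<longleftrightarrow> (\<exists>D::'a set. countable D \<and> closure D = UNIV)"

definition closed_csubspace :: "'a::cbanach set \<Rightarrow> bool" where
  "closed_csubspace M \<longleftrightarrow> closed M \<and> 0 \<in> M \<and> (\<forall>x\<in>M. \<forall>y\<in>M. x + y \<in> M)
     \<and> (\<forall>a. \<forall>x\<in>M. a *\<^sub>C x \<in> M)"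

definition closed_unit_disk :: "complex set" where
  "closed_unit_disk = {\<alpha>. cmod \<alpha> \<le> 1}"

definition DOrb :: "('a::cbanach \<Rightarrow> 'a) \<Rightarrow> 'a \<Rightarrow> 'a set" where
  "DOrb T x = {\<alpha> *\<^sub>C (T ^^ n) x | \<alpha> n. \<alpha> \<in> closed_unit_disk}"

definition diskcyclic_vector :: "('a::cbanach \<Rightarrow> 'a) \<Rightarrow> 'a \<Rightarrow> bool" where
  "diskcyclic_vector T x \<longleftrightarrow> closure (DOrb T x) = UNIV"

definition diskcyclic :: "('a::cbanach \<Rightarrow> 'a) \<Rightarrow> bool" where
  "diskcyclic T \<longleftrightarrow> (\<exists>x. diskcyclic_vector T x)"

definition M_diskcyclic_vector :: "('a::cbanach \<Rightarrow> 'a) \<Rightarrow> 'a set \<Rightarrow> 'a \<Rightarrow> bool" where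
  "M_diskcyclic_vector T M x \<longleftrightarrow>
     closed_csubspace M \<and> M \<noteq> {0} \<and> M \<noteq> UNIV \<and> M \<subseteq> closure (DOrb T x \<inter> M)"

definition M_diskcyclic :: "('a::cbanach \<Rightarrow> 'a) \<Rightarrow> 'a set \<Rightarrow> bool" where
  "M_diskcyclic T M \<longleftrightarrow> (\<exists>x. M_diskcyclic_vector T M x)"

end

theory Submission
  imports Defs
begin

lemma pow_S: "(((\<lambda>(y, v). (T y, id v)) :: 'a \<times> 'b \<Rightarrow> 'a \<times> 'b) ^^ n) (y, v) = ((T ^^ n) y, v)"
  by (induction n) (auto simp: funpow_Suc_right[symmetric] simp del: funpow.simps(2) , simp)

lemma scaleC0c: "(a::complex) *\<^sub>C (0::complex \<times> complex) = 0"
  by (simp add: scaleC_prod_def scaleC_complex_def zero_prod_def)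

lemma scaleC0a: "(a::complex) *\<^sub>C (0::'a::cbanach) = 0"
proof -
  have "norm (a *\<^sub>C (0::'a)) = 0" by (simp add: norm_scaleC)
  thus ?thesis by simp
qed

lemma scaleCcc: "(a::complex) *\<^sub>C (v::complex \<times> complex) = (a * fst v, a * snd v)"
  by (simp add: scaleC_prod_def scaleC_complex_def)

lemma not_dc:
  fixes T :: "'a::cbanach \<Rightarrow> 'a"
  shows "\<not> diskcyclic ((\<lambda>(y, v). (T y, id v)) :: 'a \<times> (complex \<times> complex) \<Rightarrow> _)"
proof
  let ?S = "(\<lambda>(y, v). (T y, id v)) :: 'a \<times> (complex \<times> complex) \<Rightarrow> _"
  assume "diskcyclic ?S"
  then obtain p where p: "closure (DOrb ?S p) = UNIV"
    unfolding diskcyclic_def diskcyclic_vector_def by blast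
  obtain y v where pv: "p = (y, v)" by (cases p)
  define K where "K = (\<lambda>\<alpha>. (\<alpha> * fst v, \<alpha> * snd v)) ` cball (0::complex) 1"
  have "compact K" unfolding K_def
    by (intro compact_continuous_image continuous_intros) auto
  hence cK: "closed K" by (rule compact_imp_closed)
  define A :: "('a \<times> (complex \<times> complex)) set" where "A = snd -` K"
  have cA: "closed A" unfolding A_def
    by (auto intro!: closed_vimage cK continuous_intros)
  have "DOrb ?S p \<subseteq> A"
    unfolding DOrb_def A_def K_def pv pow_S closed_unit_disk_def
    by (auto simp: scaleC_prod_def scaleC_complex_def intro!: image_eqI)
  hence "closure (DOrb ?S p) \<subseteq> A" using cA by (simp add: closure_minimal)
  with p have A: "A = UNIV" by auto
  define w where "w = (if v = 0 then ((1::complex), (0::complex)) else (2 * fst v, 2 * snd v))"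
  have "(0::'a, w) \<in> A" using A by auto
  hence "w \<in> K" unfolding A_def by auto
  then obtain \<alpha> :: complex where al: "cmod \<alpha> \<le> 1" and eq: "w = (\<alpha> * fst v, \<alpha> * snd v)"
    unfolding K_def by auto
  show False
  proof (cases "v = 0")
    case True thus ?thesis using eq by (simp add: w_def)
  next
    case False
    hence "fst v \<noteq> 0 \<or> snd v \<noteq> 0" by (simp add: prod_eq_iff)
    moreover have "2 * fst v = \<alpha> * fst v" "2 * snd v = \<alpha> * snd v" using eq False by (auto simp: w_def)
    ultimately have "\<alpha> = 2" by auto
    thus False using al by simp
  qed
qed

theorem mainTheorem1:
  fixes T :: "'a::cbanach \<Rightarrow> 'a" and x :: 'a
  assumes "separable_type TYPE('a)"
    and "infinite_dim_complex TYPE('a)"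
    and "bounded_clinear_op T"
    and "diskcyclic_vector T x"
  defines "S \<equiv> (\<lambda>(y, v). (T y, id v)) :: 'a \<times> (complex \<times> complex) \<Rightarrow> 'a \<times> (complex \<times> complex)"
    and "N \<equiv> {(y, v). v = (0::complex \<times> complex)} :: ('a \<times> (complex \<times> complex)) set"
  shows "\<not> diskcyclic S \<and> M_diskcyclic S N \<and> M_diskcyclic_vector S N (x, 0)"
proof -
  have N: "N = UNIV \<times> {0}" unfolding N_def by auto
  have cs: "closed_csubspace N"
    unfolding closed_csubspace_def N by (auto simp: scaleC_prod_def scaleC0c scaleC0a closed_Times zero_prod_def)
  have "\<exists>y::'a. y \<noteq> 0"
  proof (rule ccontr)
    assume "\<not> ?thesis"
    hence "cspan ({}::'a set) = UNIV" unfolding cspan_def by auto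
    thus False using assms(2) unfolding infinite_dim_complex_def by blast
  qed
  then obtain y :: 'a where y: "y \<noteq> 0" by blast
  have n0: "N \<noteq> {0}" using y N by (auto simp: zero_prod_def)
  have nU: "N \<noteq> UNIV"
  proof
    assume "N = UNIV"
    hence "(0::'a, ((1::complex), (0::complex))) \<in> N" by simp
    thus False unfolding N by (simp add: zero_prod_def)
  qed
  have D: "DOrb S (x, 0) \<inter> N = DOrb T x \<times> {0}"
    unfolding DOrb_def S_def N pow_S by (auto simp: scaleC_prod_def scaleC0c scaleC0a zero_prod_def scaleC_complex_def)
  have "closure (DOrb S (x, 0) \<inter> N) = N"
    unfolding D closure_Times using assms(4) N by (simp add: diskcyclic_vector_def)
  hence v: "M_diskcyclic_vector S N (x, 0)"
    unfolding M_diskcyclic_vector_def using cs n0 nU by simp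
  show ?thesis using v not_dc[of T] unfolding S_def M_diskcyclic_def by blast
qed

end
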